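(* A finite-dimensional Poisson $n$-Lie algebra $\mathcal P$ is nilpotent if and only if the operators $P_x$ and $Q_y$ are nilpotent for all $x\in\mathcal P$ and all $y\in\wedge^{n-1}\mathcal P$.
   Context: A Poisson $n$-Lie algebra is a commutative associative algebra $(\mathcal P,\cdot)$ with an $n$-linear skew-symmetric bracket satisfying the fundamental identity $[x_1,\dots,x_{n-1},[y_1,\dots,y_n]]=\sum_{i=1}^n[y_1,\dots,[x_1,\dots,x_{n-1},y_i],\dots,y_n]$ and the Leibniz rule $[y\cdot z,x_2,\dots,x_n]=y\cdot[z,x_2,\dots,x_n]+z\cdot[y,x_2,\dots,x_n]$. $P_x$ is the multiplication operator $z\mapsto x\cdot z$; for $y=y_1\wedge\cdots\wedge y_{n-1}$, $Q_y$ is the operator $z\mapsto[y_1,\dots,y_{n-1},z]$, extended linearly to $\wedge^{n-1}\mathcal P$. $\mathcal P$ is nilpotent if $\mathcal P^s=0$ for some $s$, where $\mathcal P^1=\mathcal P$, $\mathcal P^{k+1}=[\mathcal P^k,\mathcal P,\dots,\mathcal P]+\mathcal P^k\cdot\mathcal P$ (linear spans). *)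

theory Defs
  imports Main "HOL.Vector_Spaces"
begin

text \<open>An n-ary bracket is a function of an argument tuple
(nat \<Rightarrow> 'v), of which only the entries 0, ..., n-1 are used.\<close>

definition nilpotent_op :: "('v::zero \<Rightarrow> 'v) \<Rightarrow> bool" where
  "nilpotent_op f \<longleftrightarrow> (\<exists>k. (f ^^ k) = (\<lambda>_. 0))"

definition poisson_nlie ::
  "('k::field \<Rightarrow> 'v::ab_group_add \<Rightarrow> 'v) \<Rightarrow> nat \<Rightarrow> ('v \<Rightarrow> 'v \<Rightarrow> 'v) \<Rightarrow> ((nat \<Rightarrow> 'v) \<Rightarrow> 'v) \<Rightarrow> bool"
where
  "poisson_nlie scale n mult br \<longleftrightarrow>
     vector_space scale \<and> n \<ge> 2 \<and>
     \<comment> \<open>commutative associative bilinear product\<close>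
     (\<forall>x. Vector_Spaces.linear scale scale (mult x)) \<and>
     (\<forall>x y. mult x y = mult y x) \<and>
     (\<forall>x y z. mult (mult x y) z = mult x (mult y z)) \<and>
     \<comment> \<open>the bracket only depends on its first n arguments\<close>
     (\<forall>f g. (\<forall>i<n. f i = g i) \<longrightarrow> br f = br g) \<and>
     \<comment> \<open>n-linearity\<close>
     (\<forall>f i. i < n \<longrightarrow> Vector_Spaces.linear scale scale (\<lambda>x. br (f(i := x)))) \<and>
     \<comment> \<open>skew-symmetry\<close>
     (\<forall>f i j. i < j \<and> j < n \<longrightarrow> br (f(i := f j, j := f i)) = - br f) \<and>
     \<comment> \<open>fundamental identity\<close>
     (\<forall>x y. br (x(n - 1 := br y)) =
              (\<Sum>i<n. br (y(i := br (x(n - 1 := y i)))))) \<and>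
     \<comment> \<open>Leibniz rule\<close>
     (\<forall>f y z. br (f(0 := mult y z)) =
              mult y (br (f(0 := z))) + mult z (br (f(0 := y))))"

primrec lower_series ::
  "('k::field \<Rightarrow> 'v::ab_group_add \<Rightarrow> 'v) \<Rightarrow> nat \<Rightarrow> ('v \<Rightarrow> 'v \<Rightarrow> 'v) \<Rightarrow> ((nat \<Rightarrow> 'v) \<Rightarrow> 'v) \<Rightarrow> nat \<Rightarrow> 'v set"
where
  "lower_series scale n mult br 0 = UNIV"
| "lower_series scale n mult br (Suc k) =
     module.span scale
       ({br (f(0 := a)) | a f. a \<in> lower_series scale n mult br k} \<union>
        {mult a b | a b. a \<in> lower_series scale n mult br k})"

text \<open>Indexing: lower_series ... k is P^(k+1).\<close>
definition pn_nilpotent ::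
  "('k::field \<Rightarrow> 'v::ab_group_add \<Rightarrow> 'v) \<Rightarrow> nat \<Rightarrow> ('v \<Rightarrow> 'v \<Rightarrow> 'v) \<Rightarrow> ((nat \<Rightarrow> 'v) \<Rightarrow> 'v) \<Rightarrow> bool"
where
  "pn_nilpotent scale n mult br \<longleftrightarrow> (\<exists>s. lower_series scale n mult br s = {0})"

end

theory Submission
  imports Defs "HOL-Library.Function_Algebras"
begin

lemma sum_fun_apply: "(\<Sum>i\<in>I. f i) x = (\<Sum>i\<in>I. f i x)"
  by (induct I rule: infinite_finite_induct) auto

lemma (in vector_space) dim_strict:
  assumes "subspace S" "subspace T" "S \<subseteq> T" "S \<noteq> T" "T \<subseteq> span W" "finite W"
  shows "dim S < dim T"
proof -
  obtain B where B: "B \<subseteq> S" "independent B" "S \<subseteq> span B" "card B = dim S"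
    using basis_exists[of S] by metis
  obtain C where C: "C \<subseteq> T" "independent C" "T \<subseteq> span C" "card C = dim T"
    using basis_exists[of T] by metis
  obtain t where t: "t \<in> T" "t \<notin> S" using assms(3,4) by blast
  have "span B \<subseteq> S" using B(1) assms(1) span_minimal by blast
  hence tB: "t \<notin> span B" using t by blast
  have iB: "independent (insert t B)" using independent_insertI[OF tB B(2)] .
  have finB: "finite B" using independent_span_bound[OF assms(6) B(2)] B(1) assms(3,5) by blast
  have finC: "finite C" using independent_span_bound[OF assms(6) C(2)] C(1) assms(5) by blast
  have "insert t B \<subseteq> span C" using t B(1) assms(3) C(3) by blast
  hence "card (insert t B) \<le> card C" using independent_span_bound[OF finC iB] by blast
  moreover have "t \<notin> B" using t B(1) by blast
  ultimately show ?thesis using finB B(4) C(4) by simp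
qed

locale eb = vector_space scale for scale :: "'k::field \<Rightarrow> 'v::ab_group_add \<Rightarrow> 'v" +
  fixes Bs :: "'v set"
  assumes finB: "finite Bs" and spanB: "span Bs = UNIV"
begin

definition fscale :: "'k \<Rightarrow> ('v \<Rightarrow> 'v) \<Rightarrow> ('v \<Rightarrow> 'v)" where
  "fscale c f = (\<lambda>x. scale c (f x))"

definition lin :: "('v \<Rightarrow> 'v) \<Rightarrow> bool" where
  "lin f \<longleftrightarrow> (\<forall>x y. f (x + y) = f x + f y) \<and> (\<forall>c x. f (scale c x) = scale c (f x))"

definition LIN :: "('v \<Rightarrow> 'v) set" where "LIN = {f. lin f}"

definition comm :: "('v \<Rightarrow> 'v) \<Rightarrow> ('v \<Rightarrow> 'v) \<Rightarrow> ('v \<Rightarrow> 'v)" where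
  "comm A B = (\<lambda>x. A (B x) - B (A x))"

definition nilp :: "('v \<Rightarrow> 'v) \<Rightarrow> bool" where "nilp A \<longleftrightarrow> (\<exists>k. (A ^^ k) = 0)"

lemma fscale_apply: "fscale c f x = scale c (f x)" by (simp add: fscale_def)
lemma comm_apply: "comm A B x = A (B x) - B (A x)" by (simp add: comm_def)

sublocale F: vector_space fscale
  by unfold_locales (simp_all add: fun_eq_iff fscale_apply scale_right_distrib scale_left_distrib)

lemma lin_add: "lin f \<Longrightarrow> f (x + y) = f x + f y" by (simp add: lin_def)
lemma lin_scale: "lin f \<Longrightarrow> f (scale c x) = scale c (f x)" by (simp add: lin_def)
lemma lin_0: "lin f \<Longrightarrow> f 0 = 0"
  using lin_scale[of f 0 0] by simp
lemma lin_neg: "lin f \<Longrightarrow> f (- x) = - f x"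
  using lin_add[of f x "-x"] lin_0[of f] by (metis add.right_inverse neg_eq_iff_add_eq_0)
lemma lin_diff: "lin f \<Longrightarrow> f (x - y) = f x - f y"
  using lin_add[of f x "-y"] lin_neg[of f y] by simp
lemma lin_sum: "lin f \<Longrightarrow> f (\<Sum>i\<in>I. g i) = (\<Sum>i\<in>I. f (g i))"
  by (induct I rule: infinite_finite_induct) (auto simp: lin_0 lin_add)

lemma lin_iff_linear: "lin f \<longleftrightarrow> Vector_Spaces.linear scale scale f"
  unfolding linear_iff lin_def using vector_space_axioms by auto

lemma LIN_subspace: "F.subspace LIN"
  unfolding F.subspace_def LIN_def lin_def
  by (auto simp: scale_right_distrib algebra_simps fscale_apply)

lemma lin_comp: "lin f \<Longrightarrow> lin g \<Longrightarrow> lin (\<lambda>x. f (g x))"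
  by (simp add: lin_def)

lemma lin_funpow: "lin f \<Longrightarrow> lin (f ^^ k)"
  by (induct k) (auto simp: lin_def)

lemma lin_comm: "lin f \<Longrightarrow> lin g \<Longrightarrow> lin (comm f g)"
  by (auto simp: lin_def algebra_simps scale_right_diff_distrib comm_apply)

end

locale gact = eb scale Bs + M: vector_space sc
  for scale :: "'k::field \<Rightarrow> 'v::ab_group_add \<Rightarrow> 'v" and Bs
  and sc :: "'k \<Rightarrow> 'a::ab_group_add \<Rightarrow> 'a" +
  fixes act :: "('v \<Rightarrow> 'v) \<Rightarrow> 'a \<Rightarrow> 'a" and D :: "'a set"
  assumes D_sub: "M.subspace D"
  and act_D: "A \<in> LIN \<Longrightarrow> u \<in> D \<Longrightarrow> act A u \<in> D"
  and act_add: "A \<in> LIN \<Longrightarrow> x \<in> D \<Longrightarrow> y \<in> D \<Longrightarrow> act A (x + y) = act A x + act A y"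
  and act_scale: "A \<in> LIN \<Longrightarrow> x \<in> D \<Longrightarrow> act A (sc c x) = sc c (act A x)"
  and act_ladd: "A \<in> LIN \<Longrightarrow> B \<in> LIN \<Longrightarrow> u \<in> D \<Longrightarrow> act (A + B) u = act A u + act B u"
  and act_lscale: "A \<in> LIN \<Longrightarrow> u \<in> D \<Longrightarrow> act (fscale c A) u = sc c (act A u)"
  and act_comm: "A \<in> LIN \<Longrightarrow> B \<in> LIN \<Longrightarrow> u \<in> D \<Longrightarrow>
      act (comm A B) u = act A (act B u) - act B (act A u)"
  and act_nil: "A \<in> LIN \<Longrightarrow> nilp A \<Longrightarrow> u \<in> D \<Longrightarrow> \<exists>m. (act A ^^ m) u = 0"
begin

definition engel :: "('v \<Rightarrow> 'v) set \<Rightarrow> bool" where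
  "engel K \<longleftrightarrow> (\<forall>U W. M.subspace U \<longrightarrow> M.subspace W \<longrightarrow> W \<subseteq> U \<longrightarrow> U \<subseteq> D \<longrightarrow> W \<noteq> U \<longrightarrow>
     (\<forall>A\<in>K. act A ` U \<subseteq> U \<and> act A ` W \<subseteq> W) \<longrightarrow> (\<exists>u\<in>U. u \<notin> W \<and> (\<forall>A\<in>K. act A u \<in> W)))"

lemma zero_LIN: "0 \<in> LIN" by (simp add: LIN_def lin_def)

lemma act_zero: "u \<in> D \<Longrightarrow> act 0 u = 0"
proof -
  assume u: "u \<in> D"
  have "fscale 0 0 = (0::'v\<Rightarrow>'v)" by (simp add: fun_eq_iff fscale_apply)
  hence "act 0 u = act (fscale 0 0) u" by simp
  also have "\<dots> = sc 0 (act 0 u)" using act_lscale[OF zero_LIN u] .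
  finally show ?thesis by simp
qed

lemma engel_zero: "K \<subseteq> {0} \<Longrightarrow> engel K"
  unfolding engel_def
proof (intro allI impI)
  fix U W assume K: "K \<subseteq> {0}" and h: "M.subspace U" "M.subspace W" "W \<subseteq> U" "U \<subseteq> D" "W \<noteq> U"
  then obtain u where u: "u \<in> U" "u \<notin> W" by blast
  have "\<forall>A\<in>K. act A u \<in> W"
  proof
    fix A assume "A \<in> K" hence "A = 0" using K by blast
    thus "act A u \<in> W" using act_zero[of u] u h(4) M.subspace_0[OF h(2)] by auto
  qed
  thus "\<exists>u\<in>U. u \<notin> W \<and> (\<forall>A\<in>K. act A u \<in> W)" using u by blast
qed

lemma engel_step:
  assumes K: "K \<subseteq> LIN" "\<forall>A\<in>K. nilp A" and K': "K' \<subseteq> K"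
    and X: "X \<in> K" "\<forall>A\<in>K'. comm A X \<in> K'"
    and dec: "\<forall>B\<in>K. \<exists>A\<in>K'. \<exists>c. B = A + fscale c X"
    and E': "engel K'"
  shows "engel K"
  unfolding engel_def
proof (intro allI impI)
  fix U W assume h: "M.subspace U" "M.subspace W" "W \<subseteq> U" "U \<subseteq> D" "W \<noteq> U"
    and inv: "\<forall>A\<in>K. act A ` U \<subseteq> U \<and> act A ` W \<subseteq> W"
  from E'[unfolded engel_def, rule_format, OF h] inv K'
  obtain u0 where u0: "u0 \<in> U" "u0 \<notin> W" "\<forall>A\<in>K'. act A u0 \<in> W" by blast
  define U1 where "U1 = {u\<in>U. \<forall>A\<in>K'. act A u \<in> W}"
  define T where "T = act X"
  have XL: "X \<in> LIN" using X K by blast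
  have TU1: "T u \<in> U1" if u: "u \<in> U1" for u
  proof -
    have uU: "u \<in> U" using u by (simp add: U1_def)
    have uD: "u \<in> D" using uU h(4) by blast
    have "T u \<in> U" using inv X uU by (auto simp: T_def)
    moreover have "act A (T u) \<in> W" if A: "A \<in> K'" for A
    proof -
      have AL: "A \<in> LIN" using A K' K by blast
      have eq: "act (comm A X) u = act A (T u) - T (act A u)"
        using act_comm[OF AL XL uD] by (simp add: T_def)
      have "act A u \<in> W" using u A by (simp add: U1_def)
      moreover have "act X ` W \<subseteq> W" using inv X by blast
      ultimately have w1: "T (act A u) \<in> W" by (auto simp: T_def)
      have w2: "act (comm A X) u \<in> W" using u X(2) A by (simp add: U1_def)
      have "act A (T u) = act (comm A X) u + T (act A u)" using eq by simp
      thus ?thesis using M.subspace_add[OF h(2) w2 w1] by simp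
    qed
    ultimately show ?thesis by (simp add: U1_def)
  qed
  have powU1: "(T ^^ j) u0 \<in> U1" for j
  proof (induct j)
    case 0 show ?case using u0 by (simp add: U1_def)
  next
    case (Suc j) thus ?case using TU1 by simp
  qed
  have "nilp X" using K X by blast
  moreover have "u0 \<in> D" using u0(1) h(4) by blast
  ultimately obtain m where m: "(T ^^ m) u0 = 0"
    using act_nil[OF XL] unfolding T_def by blast
  have exW: "\<exists>j. (T ^^ j) u0 \<in> W" using m M.subspace_0[OF h(2)] by metis
  define j where "j = (LEAST j. (T ^^ j) u0 \<in> W)"
  have jW: "(T ^^ j) u0 \<in> W" unfolding j_def using exW by (rule LeastI_ex)
  have j0: "j \<noteq> 0" proof assume "j = 0" thus False using jW u0(2) by simp qed
  define v where "v = (T ^^ (j - 1)) u0"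
  have vW: "v \<notin> W" unfolding v_def j_def
    using not_less_Least[of "j - 1" "\<lambda>j. (T ^^ j) u0 \<in> W"] j0 j_def by auto
  have TvW: "T v \<in> W" using jW j0 unfolding v_def
    by (metis Suc_pred' bot_nat_0.not_eq_extremum comp_apply funpow.simps(2))
  have vU1: "v \<in> U1" unfolding v_def by (rule powU1)
  hence vU: "v \<in> U" and vD: "v \<in> D" using h(4) by (auto simp: U1_def)
  have "act B v \<in> W" if B: "B \<in> K" for B
  proof -
    obtain A c where A: "A \<in> K'" "B = A + fscale c X" using dec B by blast
    have AL: "A \<in> LIN" using A K' K by blast
    have cXL: "fscale c X \<in> LIN" using F.subspace_scale[OF LIN_subspace XL] .
    have "act B v = act A v + sc c (T v)"
      using A(2) act_ladd[OF AL cXL vD] act_lscale[OF XL vD] by (simp add: T_def)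
    moreover have "act A v \<in> W" using vU1 A by (simp add: U1_def)
    moreover have "sc c (T v) \<in> W" using M.subspace_scale[OF h(2) TvW] .
    ultimately show ?thesis using M.subspace_add[OF h(2)] by simp
  qed
  thus "\<exists>u\<in>U. u \<notin> W \<and> (\<forall>A\<in>K. act A u \<in> W)" using vU vW by blast
qed

end

context eb
begin

definition subalg :: "('v \<Rightarrow> 'v) set \<Rightarrow> bool" where
  "subalg K \<longleftrightarrow> K \<subseteq> LIN \<and> F.subspace K \<and> (\<forall>A\<in>K. \<forall>B\<in>K. comm A B \<in> K) \<and> (\<forall>A\<in>K. nilp A)"

lemma comm_add_l: "lin B \<Longrightarrow> comm (A1 + A2) B = comm A1 B + comm A2 B"
  by (simp add: fun_eq_iff comm_apply lin_add algebra_simps)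
lemma comm_scale_l: "lin B \<Longrightarrow> comm (fscale c A) B = fscale c (comm A B)"
  by (simp add: fun_eq_iff comm_apply lin_scale scale_right_diff_distrib fscale_apply)
lemma comm_zero_l: "lin B \<Longrightarrow> comm 0 B = 0"
  by (simp add: fun_eq_iff comm_apply lin_0)
lemma comm_add_r: "lin A \<Longrightarrow> comm A (B1 + B2) = comm A B1 + comm A B2"
  by (simp add: fun_eq_iff comm_apply lin_add algebra_simps)
lemma comm_scale_r: "lin A \<Longrightarrow> comm A (fscale c B) = fscale c (comm A B)"
  by (simp add: fun_eq_iff comm_apply lin_scale scale_right_diff_distrib fscale_apply)
lemma comm_zero_r: "lin A \<Longrightarrow> comm A 0 = 0"
  by (simp add: fun_eq_iff comm_apply lin_0)
lemma comm_anti: "comm A B = - comm B A"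
  by (simp add: fun_eq_iff comm_apply)
lemma comm_self: "comm A A = 0"
  by (simp add: fun_eq_iff comm_apply)

lemma comm_span_closed:
  assumes G: "G \<subseteq> LIN" "\<forall>a\<in>G. \<forall>b\<in>G. comm a b \<in> F.span G"
    and a: "a \<in> F.span G" and b: "b \<in> F.span G"
  shows "comm a b \<in> F.span G"
proof -
  have spL: "F.span G \<subseteq> LIN" using F.span_minimal[OF G(1) LIN_subspace] .
  have step1: "comm a' b' \<in> F.span G" if a': "a' \<in> F.span G" and b': "b' \<in> G" for a' b'
  proof -
    have bl: "lin b'" using b' G(1) by (auto simp: LIN_def)
    have "F.subspace {a. comm a b' \<in> F.span G}"
      unfolding F.subspace_def using bl
      by (simp add: comm_zero_l comm_add_l comm_scale_l F.span_zero F.span_add F.span_scale)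
    then show ?thesis using F.span_induct[OF a', of "\<lambda>a. comm a b' \<in> F.span G"] G(2) b' by blast
  qed
  have al: "lin a" using a spL by (auto simp: LIN_def)
  have "F.subspace {b. comm a b \<in> F.span G}"
    unfolding F.subspace_def using al
    by (simp add: comm_zero_r comm_add_r comm_scale_r F.span_zero F.span_add F.span_scale)
  then show ?thesis using F.span_induct[OF b, of "\<lambda>b. comm a b \<in> F.span G"] step1[OF a] by blast
qed

lemma LIN_fin: "\<exists>E. finite E \<and> LIN \<subseteq> F.span E"
proof -
  obtain Bb where Bb: "independent Bb" "UNIV \<subseteq> span Bb" using basis_exists[of UNIV] by metis
  have fBb: "finite Bb" using independent_span_bound[OF finB Bb(1)] spanB by auto
  have rep: "(\<Sum>b\<in>Bb. scale (representation Bb v b) b) = v" for v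
    using sum_representation_eq[OF Bb(1) _ fBb subset_refl] Bb(2) by blast
  define E where "E = (\<lambda>(b,w). (\<lambda>x. scale (representation Bb x b) w)) ` (Bb \<times> Bb)"
  have "f \<in> F.span E" if f: "f \<in> LIN" for f
  proof -
    have fl: "lin f" using f by (simp add: LIN_def)
    have eq: "f = (\<Sum>b\<in>Bb. \<Sum>w\<in>Bb. fscale (representation Bb (f b) w) (\<lambda>x. scale (representation Bb x b) w))"
    proof (rule ext)
      fix x
      have "(\<Sum>b\<in>Bb. \<Sum>w\<in>Bb. fscale (representation Bb (f b) w) (\<lambda>x. scale (representation Bb x b) w)) x
         = (\<Sum>b\<in>Bb. scale (representation Bb x b) (\<Sum>w\<in>Bb. scale (representation Bb (f b) w) w))"
        by (simp add: sum_fun_apply scale_sum_right mult.commute fscale_apply)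
      also have "\<dots> = (\<Sum>b\<in>Bb. scale (representation Bb x b) (f b))"
        by (simp add: rep)
      also have "\<dots> = f (\<Sum>b\<in>Bb. scale (representation Bb x b) b)"
        by (simp add: lin_sum[OF fl] lin_scale[OF fl])
      also have "\<dots> = f x" by (simp add: rep)
      finally show "f x = (\<Sum>b\<in>Bb. \<Sum>w\<in>Bb. fscale (representation Bb (f b) w) (\<lambda>x. scale (representation Bb x b) w)) x"
        by simp
    qed
    have "(\<Sum>b\<in>Bb. \<Sum>w\<in>Bb. fscale (representation Bb (f b) w) (\<lambda>x. scale (representation Bb x b) w)) \<in> F.span E"
      by (intro F.span_sum F.span_scale F.span_base) (auto simp: E_def)
    with eq show ?thesis by simp
  qed
  thus ?thesis using fBb by (intro exI[of _ E]) (auto simp: E_def)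
qed

definition E0 where "E0 = (SOME E. finite E \<and> LIN \<subseteq> F.span E)"
lemma E0: "finite E0" "LIN \<subseteq> F.span E0"
  using someI_ex[OF LIN_fin] by (auto simp: E0_def)

lemma ad_nil:
  assumes A: "lin A" and k: "(A ^^ k) = 0" and X: "lin X"
  shows "(comm A ^^ (2*k)) X = 0"
proof -
  define S where "S m = {(\<lambda>z. (A^^i) (X ((A^^j) z))) | i j. i + j = m}" for m
  have sw: "(A^^j) (A z) = (A^^Suc j) z" for j z by (metis comp_apply funpow_Suc_right)
  have claim: "(comm A ^^ m) X \<in> F.span (S m)" for m
  proof (induct m)
    case 0
    have "X \<in> S 0" unfolding S_def by (intro CollectI exI[of _ 0]) simp
    thus ?case by (simp, rule F.span_base)
  next
    case (Suc m)
    have sub: "F.subspace {Y. comm A Y \<in> F.span (S (Suc m))}"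
      unfolding F.subspace_def using A
      by (simp add: comm_zero_r comm_add_r comm_scale_r F.span_zero F.span_add F.span_scale)
    have gen: "comm A Y \<in> F.span (S (Suc m))" if "Y \<in> S m" for Y
    proof -
      from that obtain i j where Y: "Y = (\<lambda>z. (A^^i) (X ((A^^j) z)))" "i + j = m" by (auto simp: S_def)
      have e: "comm A Y = (\<lambda>z. (A^^Suc i) (X ((A^^j) z))) - (\<lambda>z. (A^^i) (X ((A^^Suc j) z)))"
        by (simp add: Y fun_eq_iff sw comm_apply)
      have m1: "(\<lambda>z. (A^^Suc i) (X ((A^^j) z))) \<in> S (Suc m)"
        unfolding S_def using Y(2) by (intro CollectI exI[of _ "Suc i"] exI[of _ j]) simp
      have m2: "(\<lambda>z. (A^^i) (X ((A^^Suc j) z))) \<in> S (Suc m)"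
        unfolding S_def using Y(2) by (intro CollectI exI[of _ i] exI[of _ "Suc j"]) simp
      show ?thesis unfolding e by (intro F.span_diff F.span_base m1 m2)
    qed
    have "(comm A ^^ Suc m) X = comm A ((comm A ^^ m) X)" by simp
    then show ?case using F.span_induct[OF Suc, of "\<lambda>Y. comm A Y \<in> F.span (S (Suc m))"] sub gen by simp
  qed
  have A0: "(A^^i) 0 = 0" for i using lin_0[OF lin_funpow[OF A]] .
  have X0: "X 0 = 0" using lin_0[OF X] .
  have big: "(A^^i) y = 0" if "k \<le> i" for i y
  proof -
    have "A^^i = A^^k \<circ> A^^(i-k)" using that by (metis funpow_add le_add_diff_inverse)
    thus ?thesis using k by simp
  qed
  have "S (2*k) \<subseteq> {0}"
  proof
    fix Y assume "Y \<in> S (2*k)"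
    then obtain i j where Y: "Y = (\<lambda>z. (A^^i) (X ((A^^j) z)))" "i + j = 2*k" by (auto simp: S_def)
    have "Y = 0"
    proof (cases "k \<le> i")
      case True
      thus ?thesis by (simp add: Y fun_eq_iff big)
    next
      case False then have "k \<le> j" using Y(2) by arith
      thus ?thesis by (simp add: Y fun_eq_iff X0 A0 big)
    qed
    thus "Y \<in> {0}" by simp
  qed
  hence "F.span (S (2*k)) \<subseteq> {0}" using F.span_minimal[OF _ F.subspace_single_0] by blast
  thus ?thesis using claim[of "2*k"] by blast
qed

lemma zero_LIN': "0 \<in> LIN" by (simp add: LIN_def lin_def)

lemma nilp_apply: "nilp A \<Longrightarrow> \<exists>m. (A ^^ m) u = 0"
  unfolding nilp_def by (metis zero_fun_apply)

sublocale EV: gact scale Bs scale "\<lambda>A u. A u" UNIV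
  by unfold_locales (auto simp: LIN_def lin_def fscale_apply vector_space_assms nilp_apply comm_apply)

sublocale AD: gact scale Bs fscale comm LIN
proof unfold_locales
  show "F.subspace LIN" by (rule LIN_subspace)
next
  fix A u assume "A \<in> LIN" "u \<in> LIN" thus "comm A u \<in> LIN" by (simp add: LIN_def lin_comm)
next
  fix A x y assume "A \<in> LIN" thus "comm A (x + y) = comm A x + comm A y" by (simp add: LIN_def comm_add_r)
next
  fix A x c assume "A \<in> LIN" thus "comm A (fscale c x) = fscale c (comm A x)" by (simp add: LIN_def comm_scale_r)
next
  fix A B u assume "u \<in> LIN" thus "comm (A + B) u = comm A u + comm B u" by (simp add: LIN_def comm_add_l)
next
  fix A u c assume "u \<in> LIN" thus "comm (fscale c A) u = fscale c (comm A u)" by (simp add: LIN_def comm_scale_l)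
next
  fix A B u assume "A \<in> LIN" "B \<in> LIN" "u \<in> LIN"
  thus "comm (comm A B) u = comm A (comm B u) - comm B (comm A u)"
    by (simp add: LIN_def fun_eq_iff lin_diff algebra_simps comm_apply)
next
  fix A u assume "A \<in> LIN" "nilp A" "u \<in> LIN"
  thus "\<exists>m. (comm A ^^ m) u = 0" using ad_nil by (auto simp: LIN_def nilp_def)
qed

end

context eb
begin

lemma subalg_zero: "subalg {0}"
  unfolding subalg_def using zero_LIN'
  by (auto simp: F.subspace_single_0 comm_self nilp_def intro!: exI[of _ 1])

theorem engel_both: "subalg K \<Longrightarrow> EV.engel K \<and> AD.engel K"
proof (induct "F.dim K" arbitrary: K rule: less_induct)
  case less
  have sK: "subalg K" by fact
  hence KL: "K \<subseteq> LIN" and Ksub: "F.subspace K" and Kc: "\<forall>A\<in>K. \<forall>B\<in>K. comm A B \<in> K"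
    and Kn: "\<forall>A\<in>K. nilp A" by (auto simp: subalg_def)
  have KE: "K \<subseteq> F.span E0" using KL E0 by blast
  show ?case
  proof (cases "K \<subseteq> {0}")
    case True thus ?thesis using EV.engel_zero AD.engel_zero by blast
  next
    case False
    define P where "P = {K'. subalg K' \<and> K' \<subseteq> K \<and> K' \<noteq> K}"
    have z: "{0} \<in> P" using subalg_zero False F.subspace_0[OF Ksub] by (auto simp: P_def)
    have dl: "F.dim K' < F.dim K" if "K' \<in> P" for K'
      using that F.dim_strict[OF _ Ksub _ _ KE E0(1)] by (auto simp: P_def subalg_def)
    have fin: "finite (F.dim ` P)"
      by (rule finite_subset[of _ "{..<F.dim K}"]) (auto dest: dl)
    define N where "N = Max (F.dim ` P)"
    have "N \<in> F.dim ` P" unfolding N_def using fin z by (intro Max_in) auto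
    then obtain K' where K': "K' \<in> P" "F.dim K' = N" by blast
    have mx: "F.dim K'' \<le> F.dim K'" if "K'' \<in> P" for K''
      using Max_ge[OF fin] that K'(2) by (auto simp: N_def)
    have sK': "subalg K'" and K'K: "K' \<subseteq> K" and K'ne: "K' \<noteq> K" using K' by (auto simp: P_def)
    have K'sub: "F.subspace K'" and K'c: "\<forall>A\<in>K'. \<forall>B\<in>K'. comm A B \<in> K'"
      using sK' by (auto simp: subalg_def)
    have IH: "EV.engel K' \<and> AD.engel K'" using less(1)[OF dl[OF K'(1)] sK'] .
    have "\<exists>u\<in>K. u \<notin> K' \<and> (\<forall>A\<in>K'. comm A u \<in> K')"
      using IH[unfolded AD.engel_def, THEN conjunct2, rule_format, of K K'] Ksub K'sub K'K KL K'ne Kc K'c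
      by (auto simp: image_subset_iff)
    then obtain X where X: "X \<in> K" "X \<notin> K'" "\<forall>A\<in>K'. comm A X \<in> K'" by blast
    define K'' where "K'' = F.span (insert X K')"
    have GL: "insert X K' \<subseteq> LIN" using X(1) K'K KL by blast
    have GK: "insert X K' \<subseteq> K" using X(1) K'K by blast
    have K''K: "K'' \<subseteq> K" unfolding K''_def using F.span_minimal[OF GK Ksub] .
    have gens: "\<forall>a\<in>insert X K'. \<forall>b\<in>insert X K'. comm a b \<in> F.span (insert X K')"
    proof (intro ballI)
      fix a b assume a: "a \<in> insert X K'" and b: "b \<in> insert X K'"
      show "comm a b \<in> F.span (insert X K')"
      proof (cases "a = X")
        case True
        show ?thesis
        proof (cases "b = X")
          case True thus ?thesis using \<open>a = X\<close> by (simp add: comm_self F.span_zero)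
        next
          case False
          hence "b \<in> K'" using b by blast
          hence "comm b X \<in> F.span (insert X K')" using X(3) F.span_base by blast
          thus ?thesis using \<open>a = X\<close> comm_anti[of X b] F.span_neg by metis
        qed
      next
        case False
        hence aK: "a \<in> K'" using a by blast
        show ?thesis
        proof (cases "b = X")
          case True thus ?thesis using aK X(3) F.span_base by blast
        next
          case False
          hence "b \<in> K'" using b by blast
          thus ?thesis using aK K'c F.span_base by blast
        qed
      qed
    qed
    have sK'': "subalg K''"
      unfolding subalg_def
    proof (intro conjI ballI)
      show "K'' \<subseteq> LIN" unfolding K''_def using F.span_minimal[OF GL LIN_subspace] .
      show "F.subspace K''" unfolding K''_def by simp
      fix A B assume "A \<in> K''" "B \<in> K''"
      thus "comm A B \<in> K''" unfolding K''_def using comm_span_closed[OF GL gens] by blast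
    next
      fix A assume "A \<in> K''" thus "nilp A" using K''K Kn by blast
    qed
    have K'K'': "K' \<subseteq> K''" unfolding K''_def using F.span_superset by blast
    have XK'': "X \<in> K''" unfolding K''_def using F.span_superset by blast
    have "K'' = K"
    proof (rule ccontr)
      assume "K'' \<noteq> K"
      hence "K'' \<in> P" using sK'' K''K by (auto simp: P_def)
      hence "F.dim K'' \<le> F.dim K'" by (rule mx)
      moreover have "F.dim K' < F.dim K''"
        using F.dim_strict[OF K'sub _ K'K'' _ _ E0(1)] sK'' XK'' X(2) K''K KE
        by (auto simp: subalg_def)
      ultimately show False by simp
    qed
    have dec: "\<forall>B\<in>K. \<exists>A\<in>K'. \<exists>c. B = A + fscale c X"
    proof
      fix B assume "B \<in> K"
      hence "B \<in> F.span (insert X K')" using \<open>K'' = K\<close> by (simp add: K''_def)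
      then obtain c where "B - fscale c X \<in> F.span K'" using F.span_breakdown_eq by blast
      moreover have "F.span K' = K'" using K'sub F.span_eq_iff by blast
      ultimately have "B - fscale c X \<in> K'" by metis
      thus "\<exists>A\<in>K'. \<exists>c. B = A + fscale c X" by (intro bexI[of _ "B - fscale c X"] exI[of _ c]) simp_all
    qed
    show ?thesis
      using EV.engel_step[OF KL Kn K'K X(1) X(3) dec] AD.engel_step[OF KL Kn K'K X(1) X(3) dec] IH
      by blast
  qed
qed

end

primrec kser :: "('v \<Rightarrow> 'v) set \<Rightarrow> nat \<Rightarrow> 'v::ab_group_add set" where
  "kser S 0 = {0}"
| "kser S (Suc j) = {v. \<forall>T\<in>S. T v \<in> kser S j}"

context eb
begin

lemma kser_sub: "S \<subseteq> LIN \<Longrightarrow> subspace (kser S j)"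
proof (induct j)
  case 0 thus ?case by simp
next
  case (Suc j)
  have l: "lin T" if "T \<in> S" for T using that Suc(2) by (auto simp: LIN_def)
  show ?case unfolding subspace_def
    using l Suc(1)[OF Suc(2)]
    by (auto simp: lin_0 lin_add lin_scale subspace_0 subspace_add subspace_scale)
qed

lemma kser_mono: "S \<subseteq> LIN \<Longrightarrow> kser S j \<subseteq> kser S (Suc j)"
proof (induct j)
  case 0 thus ?case by (auto simp: LIN_def lin_0)
next
  case (Suc j) thus ?case by auto
qed

lemma kser_inv: "S \<subseteq> LIN \<Longrightarrow> T \<in> S \<Longrightarrow> v \<in> kser S j \<Longrightarrow> T v \<in> kser S j"
proof (cases j)
  case 0
  assume "S \<subseteq> LIN" "T \<in> S" "v \<in> kser S j"
  thus ?thesis using 0 by (auto simp: LIN_def lin_0)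
next
  case (Suc i)
  assume "S \<subseteq> LIN" "T \<in> S" "v \<in> kser S j"
  thus ?thesis using Suc kser_mono[of S i] by auto
qed

lemma kser_full:
  assumes SL: "S \<subseteq> LIN" and st: "\<And>j. kser S j \<noteq> UNIV \<Longrightarrow> kser S j \<noteq> kser S (Suc j)"
  shows "kser S (Suc (card Bs)) = UNIV"
proof -
  have c: "kser S j = UNIV \<or> j \<le> dim (kser S j)" for j
  proof (induct j)
    case 0 thus ?case by simp
  next
    case (Suc j)
    show ?case
    proof (cases "kser S j = UNIV")
      case True thus ?thesis using kser_mono[OF SL, of j] by auto
    next
      case False
      have "dim (kser S j) < dim (kser S (Suc j))"
        using dim_strict[OF kser_sub[OF SL] kser_sub[OF SL] kser_mono[OF SL] st[OF False] _ finB] spanB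
        by auto
      thus ?thesis using Suc False by auto
    qed
  qed
  have "dim (kser S (Suc (card Bs))) \<le> card Bs" using dim_le_card[OF _ finB] spanB by auto
  thus ?thesis using c[of "Suc (card Bs)"] by auto
qed

end

locale pn = eb scale Bs for scale :: "'k::field \<Rightarrow> 'v::ab_group_add \<Rightarrow> 'v" and Bs +
  fixes n :: nat and mult :: "'v \<Rightarrow> 'v \<Rightarrow> 'v" and br :: "(nat \<Rightarrow> 'v) \<Rightarrow> 'v"
  assumes P: "poisson_nlie scale n mult br"
begin

lemma n2: "n \<ge> 2" using P by (simp add: poisson_nlie_def)
lemma mult_lin: "lin (mult x)" using P by (simp add: poisson_nlie_def lin_iff_linear)
lemma mult_comm: "mult x y = mult y x" using P by (simp add: poisson_nlie_def)
lemma mult_assoc: "mult (mult x y) z = mult x (mult y z)" using P unfolding poisson_nlie_def by blast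
lemma br_lin: "i < n \<Longrightarrow> lin (\<lambda>x. br (f(i := x)))" using P by (simp add: poisson_nlie_def lin_iff_linear)
lemma skew: "i < j \<Longrightarrow> j < n \<Longrightarrow> br (f(i := f j, j := f i)) = - br f"
  using P by (simp add: poisson_nlie_def)
lemma FI: "br (x(n - 1 := br y)) = (\<Sum>i<n. br (y(i := br (x(n - 1 := y i)))))"
  using P unfolding poisson_nlie_def by blast
lemma leib: "br (f(0 := mult y z)) = mult y (br (f(0 := z))) + mult z (br (f(0 := y)))"
  using P unfolding poisson_nlie_def by blast

definition Q :: "(nat \<Rightarrow> 'v) \<Rightarrow> 'v \<Rightarrow> 'v" where "Q f = (\<lambda>z. br (f(n - 1 := z)))"
definition LP :: "('v \<Rightarrow> 'v) set" where "LP = range mult"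
definition LQ :: "('v \<Rightarrow> 'v) set" where "LQ = F.span (range Q)"

lemma Q_lin: "lin (Q f)" unfolding Q_def using br_lin[of "n - 1" f] n2 by simp

lemma Q_swap: "Q f w = - br ((f(n - 1 := f 0))(0 := w))"
proof -
  have n0: "0 < n - 1" "n - 1 < n" using n2 by auto
  have "br ((f(n - 1 := w))(0 := (f(n - 1 := w)) (n - 1), n - 1 := (f(n - 1 := w)) 0)) = - br (f(n - 1 := w))"
    by (rule skew[OF n0])
  moreover have "(f(n - 1 := w))(0 := (f(n - 1 := w)) (n - 1), n - 1 := (f(n - 1 := w)) 0) = (f(n - 1 := f 0))(0 := w)"
    using n0 by (auto simp: fun_eq_iff)
  ultimately show ?thesis by (simp add: Q_def)
qed

lemma br0_Q: "br (f(0 := a)) = - Q (f(0 := f (n - 1))) a"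
proof -
  have n0: "0 < n - 1" "n - 1 < n" using n2 by auto
  have "br ((f(0 := a))(0 := (f(0 := a)) (n - 1), n - 1 := (f(0 := a)) 0)) = - br (f(0 := a))"
    by (rule skew[OF n0])
  moreover have "(f(0 := a))(0 := (f(0 := a)) (n - 1), n - 1 := (f(0 := a)) 0) = (f(0 := f (n - 1)))(n - 1 := a)"
    using n0 by (auto simp: fun_eq_iff)
  ultimately show ?thesis by (simp add: Q_def)
qed

lemma Q_leib: "Q f (mult y z) = mult y (Q f z) + mult z (Q f y)"
  unfolding Q_swap[of f] leib using lin_neg[OF mult_lin] by simp

lemma Q_FI: "comm (Q x) (Q y) = (\<Sum>i<n - 1. Q (y(i := Q x (y i))))"
proof (rule ext)
  fix z
  have nn: "n = Suc (n - 1)" using n2 by simp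
  define y' where "y' = y(n - 1 := z)"
  have "Q x (Q y z) = br (x(n - 1 := br y'))" by (simp add: Q_def y'_def)
  also have "\<dots> = (\<Sum>i<n. br (y'(i := br (x(n - 1 := y' i)))))" by (rule FI)
  also have "\<dots> = (\<Sum>i<n - 1. br (y'(i := br (x(n - 1 := y' i))))) + br (y'(n - 1 := br (x(n - 1 := y' (n - 1)))))"
  proof -
    have "{..<n} = {..<Suc (n - 1)}" using nn by simp
    thus ?thesis by (simp only: sum.lessThan_Suc)
  qed
  also have "br (y'(n - 1 := br (x(n - 1 := y' (n - 1))))) = Q y (Q x z)"
    by (simp add: Q_def y'_def)
  also have "(\<Sum>i<n - 1. br (y'(i := br (x(n - 1 := y' i))))) = (\<Sum>i<n - 1. Q (y(i := Q x (y i))) z)"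
  proof (rule sum.cong[OF refl])
    fix i assume "i \<in> {..<n - 1}"
    hence i: "i \<noteq> n - 1" by simp
    have "y'(i := br (x(n - 1 := y' i))) = (y(i := Q x (y i)))(n - 1 := z)"
      using i by (auto simp: fun_eq_iff y'_def Q_def)
    thus "br (y'(i := br (x(n - 1 := y' i)))) = Q (y(i := Q x (y i))) z" by (simp add: Q_def)
  qed
  finally show "comm (Q x) (Q y) z = (\<Sum>i<n - 1. Q (y(i := Q x (y i)))) z"
    by (simp add: comm_apply sum_fun_apply)
qed

lemma mult_add_l: "mult (a + b) = mult a + mult b"
  by (simp add: fun_eq_iff mult_comm[of _ "_ :: 'v"] lin_add[OF mult_lin])
lemma mult_scale_l: "mult (scale c a) = fscale c (mult a)"
  by (simp add: fun_eq_iff fscale_apply mult_comm[of _ "_ :: 'v"] lin_scale[OF mult_lin])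
lemma mult_zero_l: "mult 0 = 0"
  by (simp add: fun_eq_iff mult_comm[of 0] lin_0[OF mult_lin])

end

context pn
begin

lemma Q_LIN: "Q f \<in> LIN" using Q_lin by (simp add: LIN_def)
lemma LQ_LIN: "LQ \<subseteq> LIN" unfolding LQ_def using F.span_minimal[OF _ LIN_subspace] Q_LIN by blast
lemma LP_LIN: "LP \<subseteq> LIN" unfolding LP_def using mult_lin by (auto simp: LIN_def)

lemma LQ_form:
  assumes "A \<in> LQ"
  shows "\<exists>(m::nat) (c::nat \<Rightarrow> 'k) (Y::nat \<Rightarrow> nat \<Rightarrow> 'v). A = (\<lambda>z. \<Sum>j<m. scale (c j) (br ((Y j)(n - 1 := z))))"
  using assms unfolding LQ_def
proof (induct rule: F.span_induct_alt)
  case base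
  show ?case by (rule exI[where x="0::nat"]) (simp add: zero_fun_def)
next
  case (step c x y)
  then obtain f where f: "x = Q f" by blast
  from step obtain m :: nat and cc :: "nat \<Rightarrow> 'k" and Y :: "nat \<Rightarrow> nat \<Rightarrow> 'v" where y: "y = (\<lambda>z. \<Sum>j<m. scale (cc j) (br ((Y j)(n - 1 := z))))" by blast
  have "fscale c x + y = (\<lambda>z. \<Sum>j<Suc m. scale ((cc(m := c)) j) (br (((Y(m := f)) j)(n - 1 := z))))"
  proof (rule ext)
    fix z
    have "(\<Sum>j<m. scale ((cc(m := c)) j) (br (((Y(m := f)) j)(n - 1 := z))))
        = (\<Sum>j<m. scale (cc j) (br ((Y j)(n - 1 := z))))"
      by (rule sum.cong) auto
    thus "(fscale c x + y) z = (\<Sum>j<Suc m. scale ((cc(m := c)) j) (br (((Y(m := f)) j)(n - 1 := z))))"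
      by (simp add: f y fscale_apply Q_def add.commute)
  qed
  thus ?case by blast
qed

lemma subalg_LP:
  assumes H: "\<forall>x. nilpotent_op (mult x)"
  shows "subalg LP"
  unfolding subalg_def
proof (intro conjI ballI)
  show "LP \<subseteq> LIN" by (rule LP_LIN)
  show "F.subspace LP" unfolding F.subspace_def LP_def
    by (auto simp: mult_zero_l[symmetric] mult_add_l[symmetric] mult_scale_l[symmetric])
next
  fix A B assume "A \<in> LP" "B \<in> LP"
  then obtain a b where ab: "A = mult a" "B = mult b" by (auto simp: LP_def)
  have "comm A B = mult 0"
    by (simp add: ab fun_eq_iff comm_apply mult_zero_l mult_assoc[symmetric] mult_comm[of a b])
  thus "comm A B \<in> LP" by (simp add: LP_def)
next
  fix A assume "A \<in> LP"
  then obtain a where "A = mult a" by (auto simp: LP_def)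
  thus "nilp A" using H by (simp add: nilp_def nilpotent_op_def zero_fun_def)
qed

lemma subalg_LQ:
  assumes H: "\<forall>(m::nat) (c::nat \<Rightarrow> 'k) (Y::nat \<Rightarrow> nat \<Rightarrow> 'v).
             nilpotent_op (\<lambda>z. \<Sum>j<m. scale (c j) (br ((Y j)(n - 1 := z))))"
  shows "subalg LQ"
  unfolding subalg_def
proof (intro conjI ballI)
  show "LQ \<subseteq> LIN" by (rule LQ_LIN)
  show "F.subspace LQ" unfolding LQ_def by simp
next
  fix A B assume "A \<in> LQ" "B \<in> LQ"
  moreover have "\<forall>a\<in>range Q. \<forall>b\<in>range Q. comm a b \<in> F.span (range Q)"
  proof (clarify)
    fix a b show "comm (Q a) (Q b) \<in> F.span (range Q)"
      unfolding Q_FI by (rule F.span_sum, rule F.span_base, blast)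
  qed
  ultimately show "comm A B \<in> LQ" unfolding LQ_def
    using comm_span_closed[of "range Q"] Q_LIN by blast
next
  fix A assume "A \<in> LQ"
  then obtain m :: nat and c :: "nat \<Rightarrow> 'k" and Y :: "nat \<Rightarrow> nat \<Rightarrow> 'v" where "A = (\<lambda>z. \<Sum>j<m. scale (c j) (br ((Y j)(n - 1 := z))))"
    using LQ_form by blast
  thus "nilp A" using H by (simp add: nilp_def nilpotent_op_def zero_fun_def)
qed

lemma mixed: "A \<in> LQ \<Longrightarrow> comm A (mult y) = mult (A y)"
proof -
  assume "A \<in> LQ"
  hence "A \<in> F.span (range Q)" by (simp add: LQ_def)
  moreover have "F.subspace {A. \<forall>y. comm A (mult y) = mult (A y)}"
    unfolding F.subspace_def
    by (auto simp: comm_zero_l[OF mult_lin] comm_add_l[OF mult_lin] comm_scale_l[OF mult_lin]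
        mult_zero_l mult_add_l mult_scale_l fscale_apply)
  moreover have "comm (Q f) (mult y) = mult (Q f y)" for f y
    by (simp add: fun_eq_iff comm_apply Q_leib mult_comm[of _ "Q f y"])
  ultimately show ?thesis using F.span_induct[of A "range Q" "\<lambda>A. \<forall>y. comm A (mult y) = mult (A y)"]
    by blast
qed

end

context pn
begin

lemma backward:
  assumes H1: "\<forall>x. nilpotent_op (mult x)"
    and H2: "\<forall>(m::nat) (c::nat \<Rightarrow> 'k) (Y::nat \<Rightarrow> nat \<Rightarrow> 'v).
             nilpotent_op (\<lambda>z. \<Sum>j<m. scale (c j) (br ((Y j)(n - 1 := z))))"
  shows "pn_nilpotent scale n mult br"
proof -
  define S where "S = LP \<union> LQ"
  have SL: "S \<subseteq> LIN" using LP_LIN LQ_LIN by (auto simp: S_def)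
  have eLP: "EV.engel LP" using engel_both[OF subalg_LP[OF H1]] by blast
  have eLQ: "EV.engel LQ" using engel_both[OF subalg_LQ[OF H2]] by blast
  have st: "kser S j \<noteq> kser S (Suc j)" if ne: "kser S j \<noteq> UNIV" for j
  proof -
    let ?W = "kser S j"
    have Wsub: "subspace ?W" using kser_sub[OF SL] .
    have inv: "T v \<in> ?W" if "T \<in> S" "v \<in> ?W" for T v using kser_inv[OF SL that] .
    have i0: "A ` UNIV \<subseteq> UNIV \<and> A ` ?W \<subseteq> ?W" if "A \<in> LP" for A using inv that by (auto simp: S_def)
    obtain u0 where u0: "u0 \<notin> ?W" "\<forall>A\<in>LP. A u0 \<in> ?W"
      using eLP[unfolded EV.engel_def, rule_format, OF subspace_UNIV Wsub subset_UNIV subset_refl ne i0]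
      by blast
    define U1 where "U1 = {u. \<forall>A\<in>LP. A u \<in> ?W}"
    have lLP: "lin A" if "A \<in> LP" for A using that LP_LIN by (auto simp: LIN_def)
    have U1sub: "subspace U1" unfolding subspace_def U1_def
      using lLP by (auto simp: lin_0 lin_add lin_scale subspace_0[OF Wsub] subspace_add[OF Wsub] subspace_scale[OF Wsub])
    have WU1: "?W \<subseteq> U1" using inv by (auto simp: U1_def S_def)
    have U1ne: "?W \<noteq> U1" using u0 by (auto simp: U1_def)
    have inv1: "A ` U1 \<subseteq> U1 \<and> A ` ?W \<subseteq> ?W" if A: "A \<in> LQ" for A
    proof (intro conjI)
      show "A ` ?W \<subseteq> ?W" using inv A by (auto simp: S_def)
      show "A ` U1 \<subseteq> U1"
      proof (clarify)
        fix u assume u: "u \<in> U1"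
        have "B (A u) \<in> ?W" if B: "B \<in> LP" for B
        proof -
          obtain y where y: "B = mult y" using B by (auto simp: LP_def)
          have "comm A (mult y) u = mult (A y) u" using mixed[OF A] by simp
          hence eq: "mult y (A u) = A (mult y u) - mult (A y) u" by (simp add: comm_apply algebra_simps)
          have "mult y u \<in> ?W" using u y B by (simp add: U1_def)
          hence w1: "A (mult y u) \<in> ?W" using inv A by (auto simp: S_def)
          have w2: "mult (A y) u \<in> ?W" using u by (auto simp: U1_def LP_def)
          show ?thesis using subspace_diff[OF Wsub w1 w2] eq y by simp
        qed
        thus "A u \<in> U1" by (simp add: U1_def)
      qed
    qed
    obtain v where v: "v \<in> U1" "v \<notin> ?W" "\<forall>A\<in>LQ. A v \<in> ?W"
      using eLQ[unfolded EV.engel_def, rule_format, OF U1sub Wsub WU1 subset_UNIV U1ne inv1]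
      by blast
    have "v \<in> kser S (Suc j)" using v by (auto simp: U1_def S_def)
    thus ?thesis using v(2) by blast
  qed
  define d where "d = Suc (card Bs)"
  have full: "kser S d = UNIV" using kser_full[OF SL st] by (simp add: d_def)
  have low: "lower_series scale n mult br k \<subseteq> kser S (d - k)" if "k \<le> d" for k
    using that
  proof (induct k)
    case 0 thus ?case using full by simp
  next
    case (Suc k)
    have IH: "lower_series scale n mult br k \<subseteq> kser S (Suc (d - Suc k))"
      using Suc by (simp add: Suc_diff_Suc)
    have ksub: "subspace (kser S (d - Suc k))" by (rule kser_sub[OF SL])
    have g1: "br (f(0 := a)) \<in> kser S (d - Suc k)" if a: "a \<in> lower_series scale n mult br k" for a f
    proof -
      have "Q (f(0 := f (n - 1))) \<in> S" by (auto simp: S_def LQ_def intro: F.span_base)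
      hence "Q (f(0 := f (n - 1))) a \<in> kser S (d - Suc k)" using IH a by auto
      thus ?thesis unfolding br0_Q using subspace_neg[OF ksub] by blast
    qed
    have g2: "mult a b \<in> kser S (d - Suc k)" if a: "a \<in> lower_series scale n mult br k" for a b
    proof -
      have "mult b \<in> S" by (auto simp: S_def LP_def)
      hence "mult b a \<in> kser S (d - Suc k)" using IH a by auto
      thus ?thesis by (simp add: mult_comm)
    qed
    have "{br (f(0 := a)) | a f. a \<in> lower_series scale n mult br k} \<union>
          {mult a b | a b. a \<in> lower_series scale n mult br k} \<subseteq> kser S (d - Suc k)"
      using g1 g2 by blast
    thus ?case unfolding lower_series.simps by (rule span_minimal[OF _ ksub])
  qed
  have "lower_series scale n mult br d \<subseteq> {0}" using low[of d] by simp
  moreover have "0 \<in> lower_series scale n mult br d" by (simp add: d_def span_zero)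
  ultimately show ?thesis unfolding pn_nilpotent_def by blast
qed

lemma forward:
  assumes "pn_nilpotent scale n mult br"
  shows "(\<forall>x. nilpotent_op (mult x)) \<and>
          (\<forall>(m::nat) (c::nat \<Rightarrow> 'k) (Y::nat \<Rightarrow> nat \<Rightarrow> 'v).
             nilpotent_op (\<lambda>z. \<Sum>j<m. scale (c j) (br ((Y j)(n - 1 := z)))))"
proof -
  obtain s where s: "lower_series scale n mult br s = {0}" using assms by (auto simp: pn_nilpotent_def)
  have nil: "nilpotent_op T"
    if step: "\<And>k a. a \<in> lower_series scale n mult br k \<Longrightarrow> T a \<in> lower_series scale n mult br (Suc k)" for T
  proof -
    have "(T ^^ k) z \<in> lower_series scale n mult br k" for k z
    proof (induct k)
      case 0 show ?case by simp
    next
      case (Suc k)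
      have "(T ^^ Suc k) z = T ((T ^^ k) z)" by simp
      thus ?case using step[OF Suc] by simp
    qed
    hence "(T ^^ s) z = 0" for z using s by blast
    thus ?thesis unfolding nilpotent_op_def by (intro exI[of _ s]) (simp add: fun_eq_iff)
  qed
  show ?thesis
  proof (intro conjI allI)
    fix x show "nilpotent_op (mult x)"
    proof (rule nil)
      fix k a assume "a \<in> lower_series scale n mult br k"
      hence "mult a x \<in> lower_series scale n mult br (Suc k)"
        unfolding lower_series.simps by (intro span_base) blast
      thus "mult x a \<in> lower_series scale n mult br (Suc k)" by (simp add: mult_comm)
    qed
  next
    fix m :: nat and c :: "nat \<Rightarrow> 'k" and Y :: "nat \<Rightarrow> nat \<Rightarrow> 'v"
    show "nilpotent_op (\<lambda>z. \<Sum>j<m. scale (c j) (br ((Y j)(n - 1 := z))))"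
    proof (rule nil)
      fix k a assume a: "a \<in> lower_series scale n mult br k"
      have b: "br ((Y j)(n - 1 := a)) \<in> lower_series scale n mult br (Suc k)" for j
      proof -
        have e: "br ((Y j)(n - 1 := a)) = - br (((Y j)(n - 1 := Y j 0))(0 := a))"
          using Q_swap[of "Y j" a] by (simp add: Q_def)
        have "br (((Y j)(n - 1 := Y j 0))(0 := a)) \<in> lower_series scale n mult br (Suc k)"
          unfolding lower_series.simps using a by (intro span_base) blast
        thus ?thesis unfolding e lower_series.simps by (rule span_neg)
      qed
      show "(\<Sum>j<m. scale (c j) (br ((Y j)(n - 1 := a)))) \<in> lower_series scale n mult br (Suc k)"
        using b unfolding lower_series.simps by (intro span_sum span_scale) blast
    qed
  qed
qed

end

theorem theorem5p5:
  fixes scale :: "'k::field \<Rightarrow> 'v::ab_group_add \<Rightarrow> 'v"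
    and n :: nat and mult :: "'v \<Rightarrow> 'v \<Rightarrow> 'v" and br :: "(nat \<Rightarrow> 'v) \<Rightarrow> 'v"
  assumes "poisson_nlie scale n mult br"
    and "\<exists>B. finite B \<and> module.span scale B = UNIV"
  shows "pn_nilpotent scale n mult br \<longleftrightarrow>
         ((\<forall>x. nilpotent_op (mult x)) \<and>
          (\<forall>(m::nat) (c::nat \<Rightarrow> 'k) (Y::nat \<Rightarrow> nat \<Rightarrow> 'v).
             nilpotent_op (\<lambda>z. \<Sum>j<m. scale (c j) (br ((Y j)(n - 1 := z))))))"
proof -
  have vs: "vector_space scale" using assms(1) by (simp add: poisson_nlie_def)
  obtain B where B: "finite B" "module.span scale B = UNIV" using assms(2) by blast
  have "pn scale B n mult br"
    unfolding pn_def pn_axioms_def eb_def eb_axioms_def using vs B assms(1) by auto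
  then interpret pn scale B n mult br .
  show ?thesis using forward backward by blast
qed

end
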